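(* Let $s\ge 3$, $b\ge1$, $n=sb$ and $V=\mathbb{F}_2^n=V_1\oplus\cdots\oplus V_b$ with $V_j\cong\mathbb{F}_2^s$ (the $j$-th block of $s$ consecutive coordinates). Let $\mathbf{b}\in\mathbb{F}_2^{s-2}$ be nonzero, let $\circ_{\mathbf b}$ be the operation on $\mathbb{F}_2^s$ given by $$x\circ_{\mathbf b} y=x+y+(x_1y_2+x_2y_1)\,(0,0,\mathbf{b}),$$ and let $\circ$ be the parallel operation on $V$ applying $\circ_{\mathbf b}$ on each block $V_j$. Let $\lambda\in\mathbb{F}_2^{n\times n}$ (acting on row vectors by $x\mapsto x\lambda$), and write $\lambda$ in $b\times b$ blocks of size $s\times s$, the $(i,j)$ block being further partitioned as $\begin{pmatrix}A_{ij}&B_{ij}\\ C_{ij}&D_{ij}\end{pmatrix}$ with $A_{ij}\in\mathbb{F}_2^{2\times2}$, $B_{ij}\in\mathbb{F}_2^{2\times(s-2)}$, $C_{ij}\in\mathbb{F}_2^{(s-2)\times2}$, $D_{ij}\in\mathbb{F}_2^{(s-2)\times(s-2)}$. Then $\lambda\in H_\circ$ if and only if: (1) for each block-row index $i$ there is exactly one $j$ with $A_{ij}\neq0$, and for each block-column index $j$ exactly one $i$ with $A_{ij}\ne 0$; moreover every nonzero $A_{ij}$ is invertible; (2) $B_{ij}$ are arbitrary; (3) $C_{ij}=0$ for all $i,j$; (4) for all $i,j$: if $A_{ij}=0$ then $\mathbf{b}D_{ij}=\mathbf{0}$, and if $A_{ij}$ is invertible then $\mathbf{b}D_{ij}=\mathbf{b}$;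 moreover the $b(s-2)\times b(s-2)$ matrix $D=(D_{ij})_{i,j}$ is invertible.
   Context: $+$ is xor on $V$. For an operation $\circ$ on $V$ making $(V,\circ)$ an elementary abelian $2$-group whose translations $x\mapsto x\circ a$ are xor-affine, $H_\circ$ denotes the group of maps $f\in\mathrm{GL}(V,+)$ such that $(a\circ b)f=af\circ bf$ for all $a,b\in V$ (maps written in postfix notation). The operation $\circ_{\mathbf b}$ is an alternative operation on $\mathbb{F}_2^s$ whose weak key space $\{k: x\circ_{\mathbf b}k=x+k\ \forall x\}$ is spanned by the last $s-2$ canonical vectors. *)

theory Defs
  imports "HOL-Library.Z2" "Jordan_Normal_Form.Matrix"
begin

text \<open>The field F_2 is the type bit; vectors/matrices are Jordan_Normal_Form
  vectors and matrices with explicit dimensions. Indices are 0-based.\<close>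

definition row_mult :: "'a :: semiring_0 vec \<Rightarrow> 'a mat \<Rightarrow> 'a vec" where
  "row_mult x M = vec (dim_col M) (\<lambda>j. x \<bullet> col M j)"

definition circ_b :: "nat \<Rightarrow> bit vec \<Rightarrow> bit vec \<Rightarrow> bit vec \<Rightarrow> bit vec" where
  "circ_b s bb x y = x + y + (x $ 0 * y $ 1 + x $ 1 * y $ 0) \<cdot>\<^sub>v
      vec s (\<lambda>k. if k < 2 then 0 else bb $ (k - 2))"

definition block :: "nat \<Rightarrow> nat \<Rightarrow> 'a vec \<Rightarrow> 'a vec" where
  "block s j x = vec s (\<lambda>r. x $ (j * s + r))"

definition par_circ :: "nat \<Rightarrow> nat \<Rightarrow> bit vec \<Rightarrow> bit vec \<Rightarrow> bit vec \<Rightarrow> bit vec" where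
  "par_circ s b bb x y = vec (s * b)
     (\<lambda>k. circ_b s bb (block s (k div s) x) (block s (k div s) y) $ (k mod s))"

definition H_circ :: "'a :: ab_group_add vec set \<Rightarrow> ('a vec \<Rightarrow> 'a vec \<Rightarrow> 'a vec)
     \<Rightarrow> ('a vec \<Rightarrow> 'a vec) set" where
  "H_circ V op = {f. bij_betw f V V
      \<and> (\<forall>a\<in>V. \<forall>c\<in>V. f (a + c) = f a + f c)
      \<and> (\<forall>a\<in>V. \<forall>c\<in>V. f (op a c) = op (f a) (f c))}"

definition blkA :: "nat \<Rightarrow> 'a mat \<Rightarrow> nat \<Rightarrow> nat \<Rightarrow> 'a mat" where
  "blkA s M i j = mat 2 2 (\<lambda>(r, c). M $$ (i * s + r, j * s + c))"
definition blkB :: "nat \<Rightarrow> 'a mat \<Rightarrow> nat \<Rightarrow> nat \<Rightarrow> 'a mat" where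
  "blkB s M i j = mat 2 (s - 2) (\<lambda>(r, c). M $$ (i * s + r, j * s + 2 + c))"
definition blkC :: "nat \<Rightarrow> 'a mat \<Rightarrow> nat \<Rightarrow> nat \<Rightarrow> 'a mat" where
  "blkC s M i j = mat (s - 2) 2 (\<lambda>(r, c). M $$ (i * s + 2 + r, j * s + c))"
definition blkD :: "nat \<Rightarrow> 'a mat \<Rightarrow> nat \<Rightarrow> nat \<Rightarrow> 'a mat" where
  "blkD s M i j = mat (s - 2) (s - 2) (\<lambda>(r, c). M $$ (i * s + 2 + r, j * s + 2 + c))"

definition fullD :: "nat \<Rightarrow> nat \<Rightarrow> 'a mat \<Rightarrow> 'a mat" where
  "fullD s b M = mat (b * (s - 2)) (b * (s - 2))
     (\<lambda>(r, c). blkD s M (r div (s - 2)) (c div (s - 2)) $$ (r mod (s - 2), c mod (s - 2)))"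

end

theory Submission imports Defs "Jordan_Normal_Form.Determinant" begin


declare add_bit_eq_xor[simp del] mult_bit_eq_and[simp del]

lemma bit_add_self[simp]: "(x::bit) + x = 0"
  by (cases x) simp_all

lemma bit_brute8_om:
  fixes a0 a1 c0 c1 p q r t :: bit
  shows "(a0*p + a1*r)*(c0*q + c1*t) + (a0*q + a1*t)*(c0*p + c1*r)
         = (a0*c1 + a1*c0) * (p*t + q*r)"
  by (cases a0; cases a1; cases c0; cases c1; cases p; cases q; cases r; cases t; simp)

lemma sum_blocks: fixes k b :: nat shows "(\<Sum>p<k*b. g p) = (\<Sum>i<b. \<Sum>r<k. g (i*k+r))"
proof -
  have "(\<Sum>p<k*b. g p) = (\<Sum>i<b. sum g {i*k..<i*k+k})"
    using sum.nat_group[of g k b] by (simp add: mult.commute)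
  also have "\<dots> = (\<Sum>i<b. \<Sum>r<k. g (i*k+r))"
  proof (rule sum.cong[OF refl])
    fix i show "sum g {i*k..<i*k+k} = (\<Sum>r<k. g (i*k+r))"
    proof -
      have "sum g {0 + i*k..<k + i*k} = (\<Sum>r=0..<k. g (r + i*k))"
        by (rule sum.shift_bounds_nat_ivl)
      then show ?thesis by (simp add: lessThan_atLeast0 add.commute)
    qed
  qed
  finally show ?thesis .
qed

lemma sum_first2: "(k::nat) \<ge> 2 \<Longrightarrow> (\<Sum>r<k. g r) = g 0 + g 1 + (\<Sum>t<k-2. g (t+2))"
proof -
  assume "k \<ge> 2"
  then obtain j where k: "k = Suc (Suc j)" by (metis add_2_eq_Suc le_Suc_ex)
  show ?thesis unfolding k sum.lessThan_Suc_shift by (simp del: sum.lessThan_Suc add: add.assoc)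
qed

lemma sum_support3:
  fixes g :: "nat \<Rightarrow> 'a::comm_monoid_add"
  assumes "m1 < n" "m2 < n" "m3 < n" "m1 \<noteq> m2" "m1 \<noteq> m3" "m2 \<noteq> m3"
    and "\<And>m. m < n \<Longrightarrow> m \<noteq> m1 \<Longrightarrow> m \<noteq> m2 \<Longrightarrow> m \<noteq> m3 \<Longrightarrow> g m = 0"
  shows "(\<Sum>m<n. g m) = g m1 + g m2 + g m3"
proof -
  have "(\<Sum>m<n. g m) = (\<Sum>m\<in>{m1,m2,m3}. g m)"
    by (rule sum.mono_neutral_right) (use assms in auto)
  also have "\<dots> = g m1 + g m2 + g m3" using assms by (simp add: add.assoc)
  finally show ?thesis .
qed

lemma sum_support2:
  fixes g :: "nat \<Rightarrow> 'a::comm_monoid_add"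
  assumes "m1 < n" "m2 < n" "m1 \<noteq> m2"
    and "\<And>m. m < n \<Longrightarrow> m \<noteq> m1 \<Longrightarrow> m \<noteq> m2 \<Longrightarrow> g m = 0"
  shows "(\<Sum>m<n. g m) = g m1 + g m2"
proof -
  have "(\<Sum>m<n. g m) = (\<Sum>m\<in>{m1,m2}. g m)"
    by (rule sum.mono_neutral_right) (use assms in auto)
  also have "\<dots> = g m1 + g m2" using assms by simp
  finally show ?thesis .
qed

lemma sum_support1:
  fixes g :: "nat \<Rightarrow> 'a::comm_monoid_add"
  assumes "m1 < n" and "\<And>m. m < n \<Longrightarrow> m \<noteq> m1 \<Longrightarrow> g m = 0"
  shows "(\<Sum>m<n. g m) = g m1"
proof -
  have "(\<Sum>m<n. g m) = (\<Sum>m\<in>{m1}. g m)"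
    by (rule sum.mono_neutral_right) (use assms in auto)
  then show ?thesis by simp
qed

lemma invertible_iff_det:
  assumes A: "(A :: 'a :: field mat) \<in> carrier_mat n n"
  shows "invertible_mat A \<longleftrightarrow> det A \<noteq> 0"
proof
  assume "invertible_mat A"
  then obtain B where AB: "A * B = 1\<^sub>m n" and BA: "B * A = 1\<^sub>m (dim_row B)"
    using A unfolding invertible_mat_def inverts_mat_def by auto
  have "dim_col B = n" using AB by (metis index_mult_mat(3) index_one_mat(3))
  moreover have "dim_row B = n" using BA A by (metis index_mult_mat(3) index_one_mat(3) carrier_matD(2))
  ultimately have B: "B \<in> carrier_mat n n" by auto
  have "det A * det B = 1" using det_mult[OF A B] AB by simp
  then show "det A \<noteq> 0" by auto
next
  assume "det A \<noteq> 0"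
  from det_non_zero_imp_unit[OF A this, unfolded Units_def, of "()"]
  obtain B where B: "B \<in> carrier_mat n n" and BA: "B * A = 1\<^sub>m n" and AB: "A * B = 1\<^sub>m n"
    by (auto simp: ring_mat_def)
  then show "invertible_mat A" using A unfolding invertible_mat_def inverts_mat_def square_mat.simps
    by auto
qed

lemma invertible2:
  fixes M :: "bit mat"
  assumes M: "M \<in> carrier_mat 2 2"
  shows "invertible_mat M \<longleftrightarrow> M$$(0,0)*M$$(1,1) + M$$(0,1)*M$$(1,0) = 1"
proof
  assume "invertible_mat M"
  then obtain B where AB: "M * B = 1\<^sub>m 2" and BA: "B * M = 1\<^sub>m (dim_row B)"
    using M unfolding invertible_mat_def inverts_mat_def by auto
  have "dim_col B = 2" using AB by (metis index_mult_mat(3) index_one_mat(3))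
  moreover have "dim_row B = 2" using BA M by (metis index_mult_mat(3) index_one_mat(3) carrier_matD(2))
  ultimately have B: "B \<in> carrier_mat 2 2" by auto
  have e: "(M*B)$$(i,j) = M$$(i,0)*B$$(0,j) + M$$(i,1)*B$$(1,j)" if "i<2" "j<2" for i j
    using M B that by (simp add: scalar_prod_def numeral_2_eq_2)
  have e00: "M$$(0,0)*B$$(0,0) + M$$(0,1)*B$$(1,0) = 1" using e[of 0 0] AB by simp
  have e01: "M$$(0,0)*B$$(0,1) + M$$(0,1)*B$$(1,1) = 0" using e[of 0 1] AB by simp
  have e10: "M$$(1,0)*B$$(0,0) + M$$(1,1)*B$$(1,0) = 0" using e[of 1 0] AB by simp
  have e11: "M$$(1,0)*B$$(0,1) + M$$(1,1)*B$$(1,1) = 1" using e[of 1 1] AB by simp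
  show "M$$(0,0)*M$$(1,1) + M$$(0,1)*M$$(1,0) = 1"
    using e00 e01 e10 e11
    by (cases "M$$(0,0)"; cases "M$$(0,1)"; cases "M$$(1,0)"; cases "M$$(1,1)";
        cases "B$$(0,0)"; cases "B$$(0,1)"; cases "B$$(1,0)"; cases "B$$(1,1)"; simp)
next
  assume d: "M$$(0,0)*M$$(1,1) + M$$(0,1)*M$$(1,0) = 1"
  define B where "B = mat 2 2 (\<lambda>(i,j). if i = j then M$$(1-i,1-j) else M$$(i,j))"
  have B: "B \<in> carrier_mat 2 2" unfolding B_def by simp
  have e: "(X*Y)$$(i,j) = X$$(i,0)*Y$$(0,j) + X$$(i,1)*Y$$(1,j)"
    if "X \<in> carrier_mat 2 2" "Y \<in> carrier_mat 2 2" "i<2" "j<2" for X Y :: "bit mat" and i j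
    using that by (simp add: scalar_prod_def numeral_2_eq_2)
  have Bv: "B$$(0,0) = M$$(1,1)" "B$$(0,1) = M$$(0,1)" "B$$(1,0) = M$$(1,0)" "B$$(1,1) = M$$(0,0)"
    "B$$(0,Suc 0) = M$$(0,Suc 0)" "B$$(Suc 0,0) = M$$(Suc 0,0)" "B$$(Suc 0,Suc 0) = M$$(0,0)" "B$$(0,0) = M$$(Suc 0,Suc 0)"
    unfolding B_def by auto
  have c2: "i < 2 \<Longrightarrow> i = 0 \<or> i = 1" for i :: nat by auto
  have "M * B = 1\<^sub>m 2"
  proof (rule eq_matI)
    fix i j assume "i < dim_row (1\<^sub>m 2)" "j < dim_col (1\<^sub>m 2)"
    then have ij: "i < 2" "j < 2" by auto
    show "(M*B)$$(i,j) = 1\<^sub>m 2 $$(i,j)"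
      unfolding e[OF M B ij] using c2[OF ij(1)] c2[OF ij(2)] d
      by (cases "M$$(0,0)"; cases "M$$(0,1)"; cases "M$$(1,0)"; cases "M$$(1,1)"; auto simp: Bv)
  qed (use M B in auto)
  moreover have "B * M = 1\<^sub>m 2"
  proof (rule eq_matI)
    fix i j assume "i < dim_row (1\<^sub>m 2)" "j < dim_col (1\<^sub>m 2)"
    then have ij: "i < 2" "j < 2" by auto
    show "(B*M)$$(i,j) = 1\<^sub>m 2 $$(i,j)"
      unfolding e[OF B M ij] using c2[OF ij(1)] c2[OF ij(2)] d
      by (cases "M$$(0,0)"; cases "M$$(0,1)"; cases "M$$(1,0)"; cases "M$$(1,1)"; auto simp: Bv)
  qed (use M B in auto)
  ultimately show "invertible_mat M" using M B unfolding invertible_mat_def inverts_mat_def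
    by auto
qed




locale T5 =
  fixes s b :: nat and bb :: "bit vec" and L :: "bit mat"
  assumes s3: "s \<ge> 3" and b1: "b \<ge> 1" and bbc: "bb \<in> carrier_vec (s-2)"
    and bbnz: "bb \<noteq> 0\<^sub>v (s-2)" and Lc: "L \<in> carrier_mat (s*b) (s*b)"
begin

abbreviation n where "n \<equiv> s*b"
definition f where "f x = row_mult x L"
definition om :: "nat \<Rightarrow> bit vec \<Rightarrow> bit vec \<Rightarrow> bit" where
  "om i x y = x$(i*s)*y$(i*s+1) + x$(i*s+1)*y$(i*s)"
definition E where "E i m = (\<Sum>t<s-2. bb$t * L$$(i*s+2+t, m))"
abbreviation op where "op \<equiv> par_circ s b bb"

lemma dimL[simp]: "dim_row L = n" "dim_col L = n" using Lc by auto

lemma f_nth: "x \<in> carrier_vec n \<Longrightarrow> m < n \<Longrightarrow> f x $ m = (\<Sum>p<n. x$p * L$$(p,m))"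
  unfolding f_def row_mult_def by (auto simp: scalar_prod_def lessThan_atLeast0 intro!: sum.cong)

lemma f_carrier[simp]: "f x \<in> carrier_vec n"
  unfolding f_def row_mult_def by auto

lemma dim_f[simp]: "dim_vec (f x) = n" unfolding f_def row_mult_def by auto

lemma idx: "i < b \<Longrightarrow> r < s \<Longrightarrow> i*s + r < n"
proof -
  assume "i < b" "r < s"
  then have "i*s + r < (i+1)*s" by simp
  also have "\<dots> \<le> b*s" using \<open>i<b\<close> by (intro mult_right_mono) auto
  finally show ?thesis by (simp add: mult.commute)
qed

lemma dm: "r < s \<Longrightarrow> (i*s+r) div s = i" "r < s \<Longrightarrow> (i*s+r) mod s = r"
  by auto

lemma s2: "s \<ge> 2" "0 < s" using s3 by auto

lemma op_carrier[simp]: "op x y \<in> carrier_vec n" unfolding par_circ_def by auto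

lemma op_nth: "x \<in> carrier_vec n \<Longrightarrow> y \<in> carrier_vec n \<Longrightarrow> m < n \<Longrightarrow>
  op x y $ m = x$m + y$m + (if 2 \<le> m mod s then om (m div s) x y * bb$(m mod s - 2) else 0)"
proof -
  assume m: "m < n"
  have ms: "m mod s < s" using s2 by auto
  have e: "m div s * s + m mod s = m" by simp
  show ?thesis
    unfolding par_circ_def circ_b_def block_def om_def
    using m ms s2 e by (simp add: ac_simps)
qed

lemma f_add: "a \<in> carrier_vec n \<Longrightarrow> c \<in> carrier_vec n \<Longrightarrow> f (a + c) = f a + f c"
  by (rule eq_vecI) (auto simp: f_nth sum.distrib distrib_right)

lemma f_op: "a \<in> carrier_vec n \<Longrightarrow> c \<in> carrier_vec n \<Longrightarrow> m < n \<Longrightarrow>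
  f (op a c) $ m = f a $ m + f c $ m + (\<Sum>i<b. om i a c * E i m)"
proof -
  assume a: "a \<in> carrier_vec n" and c: "c \<in> carrier_vec n" and m: "m < n"
  let ?h = "\<lambda>p. (if 2 \<le> p mod s then om (p div s) a c * bb$(p mod s - 2) else 0) * L$$(p,m)"
  have "f (op a c) $ m = (\<Sum>p<n. a$p * L$$(p,m) + c$p * L$$(p,m) + ?h p)"
    using a c m by (auto simp: f_nth op_nth distrib_right intro!: sum.cong)
  also have "\<dots> = f a $ m + f c $ m + (\<Sum>p<n. ?h p)"
    using a c m by (simp add: f_nth sum.distrib)
  also have "(\<Sum>p<n. ?h p) = (\<Sum>i<b. \<Sum>r<s. ?h (i*s+r))" by (rule sum_blocks)
  also have "\<dots> = (\<Sum>i<b. om i a c * E i m)"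
  proof (rule sum.cong[OF refl])
    fix i assume i: "i \<in> {..<b}"
    have "(\<Sum>r<s. ?h (i*s+r)) = ?h (i*s+0) + ?h (i*s+1) + (\<Sum>t<s-2. ?h (i*s+(t+2)))"
      using sum_first2[OF s2(1)] .
    also have "\<dots> = (\<Sum>t<s-2. om i a c * (bb$t * L$$(i*s+2+t, m)))"
    proof -
      have h0: "?h (i*s+0) = 0" using s2 by simp
      have h1: "?h (i*s+1) = 0" using s3 dm[of 1 i] by simp
      have ht: "?h (i*s+(t+2)) = om i a c * (bb$t * L$$(i*s+2+t, m))" if "t < s-2" for t
        using that dm[of "t+2" i] by (simp add: ac_simps)
      show ?thesis unfolding h0 h1 add_0_left
        by (rule sum.cong[OF refl], rule ht, simp)
    qed
    also have "\<dots> = om i a c * E i m" unfolding E_def by (simp add: sum_distrib_left)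
    finally show "(\<Sum>r<s. ?h (i*s+r)) = om i a c * E i m" .
  qed
  finally show ?thesis .
qed

lemma hom_iff:
  "(\<forall>a\<in>carrier_vec n. \<forall>c\<in>carrier_vec n. f (op a c) = op (f a) (f c)) \<longleftrightarrow>
   (\<forall>a\<in>carrier_vec n. \<forall>c\<in>carrier_vec n. \<forall>m<n. (\<Sum>i<b. om i a c * E i m) =
      (if 2 \<le> m mod s then om (m div s) (f a) (f c) * bb$(m mod s - 2) else 0))"
proof -
  have "f (op a c) = op (f a) (f c) \<longleftrightarrow> (\<forall>m<n. (\<Sum>i<b. om i a c * E i m) =
      (if 2 \<le> m mod s then om (m div s) (f a) (f c) * bb$(m mod s - 2) else 0))"
    (is "_ \<longleftrightarrow> ?R") if a: "a \<in> carrier_vec n" and c: "c \<in> carrier_vec n" for a c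
  proof -
    have "f (op a c) = op (f a) (f c) \<longleftrightarrow> (\<forall>m<n. f (op a c) $ m = op (f a) (f c) $ m)"
      by (metis carrier_vecD eq_vecI f_carrier op_carrier)
    also have "\<dots> \<longleftrightarrow> ?R"
      using a c by (simp add: f_op op_nth add.assoc)
    finally show ?thesis .
  qed
  then show ?thesis by blast
qed

end



lemma om2_bit: fixes a b c d :: bit
  shows "a \<noteq> 0 \<or> b \<noteq> 0 \<Longrightarrow> c \<noteq> 0 \<or> d \<noteq> 0 \<Longrightarrow> a*d + b*c = 0 \<Longrightarrow> a = c \<and> b = d"
  by (cases a; cases b; cases c; cases d; simp)

lemma W2self_bit: fixes a b :: bit shows "a*b + b*a = 0"
  by (cases a; cases b; simp)

context T5 begin

definition W2 where "W2 k p q = L$$(p,k*s)*L$$(q,k*s+1) + L$$(p,k*s+1)*L$$(q,k*s)"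
definition Az where "Az i k \<longleftrightarrow> L$$(i*s,k*s) = 0 \<and> L$$(i*s,k*s+1) = 0 \<and> L$$(i*s+1,k*s) = 0 \<and> L$$(i*s+1,k*s+1) = 0"

lemma W2_comm: "W2 k p q = W2 k q p" unfolding W2_def by (simp add: ac_simps)

lemma blk_lt: "q < n \<Longrightarrow> q div s < b"
  using s2 by (simp add: less_mult_imp_div_less mult.commute)

lemma q_dec: "q div s * s + q mod s = q" by simp

lemma dec2: "\<not> 2 \<le> x mod s \<Longrightarrow> x = x div s * s + 0 \<or> x = x div s * s + 1"
proof -
  assume "\<not> 2 \<le> x mod s"
  then have "x mod s = 0 \<or> x mod s = 1" by auto
  then show ?thesis by (metis q_dec)
qed

lemma bb_nz: obtains t0 where "t0 < s-2" "bb$t0 = 1"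
proof -
  from bbnz bbc obtain t where "t < s-2" "bb$t \<noteq> 0"
    by (metis carrier_vecD eq_vecI index_zero_vec(1) index_zero_vec(2))
  then show ?thesis using that by simp
qed

lemma f_unit: "p < n \<Longrightarrow> m < n \<Longrightarrow> f (unit_vec n p) $ m = L$$(p,m)"
  by (simp add: f_nth, subst sum_support1[of p], auto)

lemma np: "p div s \<noteq> q div s \<or> 2 \<le> p mod s \<or> 2 \<le> q mod s \<Longrightarrow>
  \<forall>i<b. \<not>(p = i*s \<and> q = i*s+1) \<and> \<not>(p = i*s+1 \<and> q = i*s)"
  using s3 dm[of 1] dm[of 0] by auto

lemma om_units: assumes "p < n" "q < n" "i < b"
  shows "om i (unit_vec n p) (unit_vec n q) =
    (if p = i*s \<and> q = i*s+1 then 1 else 0) + (if p = i*s+1 \<and> q = i*s then 1 else 0)"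
  using assms idx[of i 0] idx[of i 1] s3 unfolding om_def by auto

lemma eq_block: "i*s + r = j*s + r' \<Longrightarrow> r < s \<Longrightarrow> r' < s \<Longrightarrow> i = j \<and> r = r'"
  by (metis dm)

end

locale T5F = T5 +
  assumes hom: "\<forall>a\<in>carrier_vec n. \<forall>c\<in>carrier_vec n. f (op a c) = op (f a) (f c)"
    and bij: "bij_betw f (carrier_vec n) (carrier_vec n)"
begin

lemma G: "a \<in> carrier_vec n \<Longrightarrow> c \<in> carrier_vec n \<Longrightarrow> m < n \<Longrightarrow> (\<Sum>i<b. om i a c * E i m) =
      (if 2 \<le> m mod s then om (m div s) (f a) (f c) * bb$(m mod s - 2) else 0)"
  using hom unfolding hom_iff by blast

lemma om_f_units: "p < n \<Longrightarrow> q < n \<Longrightarrow> k < b \<Longrightarrow>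
  om k (f (unit_vec n p)) (f (unit_vec n q)) = W2 k p q"
  unfolding om_def W2_def using idx[of k 0] idx[of k 1] s3 by (simp add: f_unit)

lemma H2: assumes j: "j < b" and m: "m < n"
  shows "E j m = (if 2 \<le> m mod s then W2 (m div s) (j*s) (j*s+1) * bb$(m mod s - 2) else 0)"
proof -
  have p: "j*s < n" "j*s+1 < n" using idx[OF j, of 0] idx[OF j, of 1] s3 by auto
  have "(\<Sum>i<b. om i (unit_vec n (j*s)) (unit_vec n (j*s+1)) * E i m) = E j m"
  proof (subst sum_support1[of j])
    show "j < b" by fact
    fix i assume i: "i < b" "i \<noteq> j"
    have "j*s \<noteq> i*s" using i s2 by auto
    moreover have "j*s+1 \<noteq> i*s" using eq_block[of j 1 i 0] s3 by auto
    ultimately show "om i (unit_vec n (j*s)) (unit_vec n (j*s+1)) * E i m = 0"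
      using om_units[OF p i(1)] by simp
  next
    show "om j (unit_vec n (j*s)) (unit_vec n (j*s+1)) * E j m = E j m"
      using om_units[OF p j] eq_block[of j 1 j 0] s3 by simp
  qed
  moreover have "m div s < b" using blk_lt[OF m] .
  ultimately show ?thesis
    using G[of "unit_vec n (j*s)" "unit_vec n (j*s+1)" m] p m
    by (simp add: om_f_units)
qed

lemma H1: assumes p: "p < n" and q: "q < n" and k: "k < b"
  and npq: "\<forall>i<b. \<not>(p = i*s \<and> q = i*s+1) \<and> \<not>(p = i*s+1 \<and> q = i*s)"
  shows "W2 k p q = 0"
proof -
  obtain t0 where t0: "t0 < s-2" "bb$t0 = 1" using bb_nz .
  let ?m = "k*s + (2+t0)"
  have m: "?m < n" using idx[OF k, of "2+t0"] t0 by auto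
  have mm: "?m mod s = 2+t0" "?m div s = k" using dm[of "2+t0" k] t0 by auto
  have "(\<Sum>i<b. om i (unit_vec n p) (unit_vec n q) * E i ?m) = 0"
    using npq om_units[OF p q] by (intro sum.neutral) auto
  then show ?thesis
    using G[of "unit_vec n p" "unit_vec n q" ?m] p q m mm t0 k
    by (simp add: om_f_units)
qed

lemma ZW: assumes W: "W \<in> carrier_vec n" and h: "\<forall>p<n. (\<Sum>m<n. L$$(p,m) * W$m) = 0"
  shows "W = 0\<^sub>v n"
proof (rule ccontr)
  assume "W \<noteq> 0\<^sub>v n"
  then obtain m0 where m0: "m0 < n" "W$m0 = 1" using W
    by (metis bit_not_zero_iff carrier_vecD eq_vecI index_zero_vec(1) index_zero_vec(2))
  have "unit_vec n m0 \<in> f ` carrier_vec n" using bij unfolding bij_betw_def by auto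
  then obtain x where x: "x \<in> carrier_vec n" "f x = unit_vec n m0" by auto
  have "(\<Sum>m<n. f x $ m * W$m) = 1"
    using m0 x by (subst sum_support1[of m0]) auto
  moreover have "(\<Sum>m<n. f x $ m * W$m) = (\<Sum>m<n. \<Sum>p<n. x$p * (L$$(p,m) * W$m))"
    using x(1) by (auto simp: f_nth sum_distrib_right mult.assoc intro!: sum.cong)
  moreover have "\<dots> = (\<Sum>p<n. x$p * (\<Sum>m<n. L$$(p,m) * W$m))"
    by (subst sum.swap) (simp add: sum_distrib_left)
  moreover have "\<dots> = 0" using h by simp
  ultimately show False by simp
qed

lemma ZI: assumes U: "U \<in> carrier_vec n" and h: "\<forall>m<n. (\<Sum>p<n. U$p * L$$(p,m)) = 0"
  shows "U = 0\<^sub>v n"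
proof -
  have "f U = f (0\<^sub>v n)"
    by (rule eq_vecI) (use U h in \<open>auto simp: f_nth\<close>)
  then show ?thesis using bij U unfolding bij_betw_def inj_on_def by auto
qed

lemma Zk: assumes k: "k < b" and ab: "\<alpha> \<noteq> 0 \<or> \<beta> \<noteq> 0"
  and h: "\<forall>q<n. L$$(q,k*s)*\<beta> + L$$(q,k*s+1)*\<alpha> = 0"
  shows False
proof -
  define W where "W = vec n (\<lambda>m. if m = k*s then \<beta> else if m = k*s+1 then \<alpha> else (0::bit))"
  have kk: "k*s < n" "k*s+1 < n" using idx[OF k, of 0] idx[OF k, of 1] s3 by auto
  have "W = 0\<^sub>v n"
  proof (rule ZW)
    show "W \<in> carrier_vec n" unfolding W_def by simp
    show "\<forall>p<n. (\<Sum>m<n. L$$(p,m) * W$m) = 0"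
    proof (intro allI impI)
      fix p assume p: "p < n"
      have "(\<Sum>m<n. L$$(p,m) * W$m) = L$$(p,k*s) * W$(k*s) + L$$(p,k*s+1) * W$(k*s+1)"
        by (rule sum_support2) (use kk in \<open>auto simp: W_def\<close>)
      also have "\<dots> = 0" using h p kk by (simp add: W_def)
      finally show "(\<Sum>m<n. L$$(p,m) * W$m) = 0" .
    qed
  qed
  then have "W$(k*s) = 0" "W$(k*s+1) = 0" using kk by auto
  then show False using ab kk by (auto simp: W_def)
qed

lemma Cz0: assumes p: "p < n" "2 \<le> p mod s" and k: "k < b"
  shows "L$$(p,k*s) = 0 \<and> L$$(p,k*s+1) = 0"
proof (rule ccontr)
  assume "\<not> ?thesis"
  then have ab: "L$$(p,k*s) \<noteq> 0 \<or> L$$(p,k*s+1) \<noteq> 0" by auto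
  have "\<forall>q<n. L$$(q,k*s)*L$$(p,k*s+1) + L$$(q,k*s+1)*L$$(p,k*s) = 0"
  proof (intro allI impI)
    fix q assume q: "q < n"
    have "W2 k q p = 0" by (rule H1[OF q p(1) k np]) (use p in auto)
    then show "L$$(q,k*s)*L$$(p,k*s+1) + L$$(q,k*s+1)*L$$(p,k*s) = 0" by (simp add: W2_def)
  qed
  then show False using Zk[OF k ab] by blast
qed

lemma Cz: assumes p: "p < n" "2 \<le> p mod s" and m: "m < n" "m mod s < 2"
  shows "L$$(p,m) = 0"
proof -
  have "m = m div s * s + 0 \<or> m = m div s * s + 1" using m(2) dec2[of m] by auto
  then show ?thesis using Cz0[OF p blk_lt[OF m(1)]] by auto
qed

lemma rowzero: assumes q: "q < n" and k: "k < b" and h: "Az (q div s) k \<or> 2 \<le> q mod s"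
  shows "L$$(q,k*s) = 0 \<and> L$$(q,k*s+1) = 0"
proof (cases "2 \<le> q mod s")
  case True then show ?thesis using Cz0[OF q True k] by auto
next
  case False
  then have "q = q div s * s + 0 \<or> q = q div s * s + 1" using dec2[of q] by auto
  then show ?thesis using h False unfolding Az_def by auto
qed

lemma col_ex: assumes k: "k < b" shows "\<exists>i<b. \<not> Az i k"
proof (rule ccontr)
  assume "\<not> ?thesis"
  then have "\<forall>q<n. L$$(q,k*s)*1 + L$$(q,k*s+1)*0 = 0"
    using rowzero[OF _ k] blk_lt by auto
  then show False using Zk[OF k, of 0 1] by auto
qed

lemma nAz_obtain: assumes "\<not> Az i k"
  obtains p where "p = i*s \<or> p = i*s+1" "L$$(p,k*s) \<noteq> 0 \<or> L$$(p,k*s+1) \<noteq> 0"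
  using assms unfolding Az_def by blast

lemma col_uniq: assumes i: "i < b" "i' < b" "i \<noteq> i'" and k: "k < b"
  and nz: "\<not> Az i k" "\<not> Az i' k"
  shows False
proof -
  obtain p where p: "p = i*s \<or> p = i*s+1" "L$$(p,k*s) \<noteq> 0 \<or> L$$(p,k*s+1) \<noteq> 0"
    using nAz_obtain[OF nz(1)] .
  obtain q where q: "q = i'*s \<or> q = i'*s+1" "L$$(q,k*s) \<noteq> 0 \<or> L$$(q,k*s+1) \<noteq> 0"
    using nAz_obtain[OF nz(2)] .
  have pn: "p < n" "p div s = i" using p(1) idx[OF i(1), of 0] idx[OF i(1), of 1] s3 dm[of 0 i] dm[of 1 i] by auto
  have qn: "q < n" "q div s = i'" using q(1) idx[OF i(2), of 0] idx[OF i(2), of 1] s3 dm[of 0 i'] dm[of 1 i'] by auto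
  have "W2 k p q = 0" using H1[OF pn(1) qn(1) k np] pn qn i by auto
  then have eq: "L$$(p,k*s) = L$$(q,k*s)" "L$$(p,k*s+1) = L$$(q,k*s+1)"
    using om2_bit[OF p(2) q(2)] unfolding W2_def by auto
  have "\<forall>r<n. L$$(r,k*s)*L$$(p,k*s+1) + L$$(r,k*s+1)*L$$(p,k*s) = 0"
  proof (intro allI impI)
    fix r assume r: "r < n"
    have "W2 k r p = 0"
    proof (cases "2 \<le> r mod s")
      case True then show ?thesis using rowzero[OF r k] unfolding W2_def by auto
    next
      case False
      show ?thesis
      proof (cases "r div s = i")
        case False then show ?thesis using H1[OF r pn(1) k np] pn by auto
      next
        case True
        then have "W2 k r q = 0" using H1[OF r qn(1) k np] qn i by auto
        then show ?thesis using eq unfolding W2_def by simp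
      qed
    qed
    then show "L$$(r,k*s)*L$$(p,k*s+1) + L$$(r,k*s+1)*L$$(p,k*s) = 0" unfolding W2_def .
  qed
  then show False using Zk[OF k, of "L$$(p,k*s)" "L$$(p,k*s+1)"] p(2) by blast
qed

lemma A_inv: assumes i: "i < b" and k: "k < b" and nz: "\<not> Az i k"
  shows "W2 k (i*s) (i*s+1) = 1"
proof (rule ccontr)
  assume "W2 k (i*s) (i*s+1) \<noteq> 1"
  then have d0: "W2 k (i*s) (i*s+1) = 0" by simp
  obtain p where p: "p = i*s \<or> p = i*s+1" "L$$(p,k*s) \<noteq> 0 \<or> L$$(p,k*s+1) \<noteq> 0"
    using nAz_obtain[OF nz] .
  have "\<forall>r<n. L$$(r,k*s)*L$$(p,k*s+1) + L$$(r,k*s+1)*L$$(p,k*s) = 0"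
  proof (intro allI impI)
    fix r assume r: "r < n"
    have "W2 k r p = 0"
    proof (cases "2 \<le> r mod s")
      case True then show ?thesis using rowzero[OF r k] unfolding W2_def by auto
    next
      case False
      show ?thesis
      proof (cases "r div s = i")
        case False
        then have "Az (r div s) k" using col_uniq[OF i blk_lt[OF r] _ k nz] by auto
        then show ?thesis using rowzero[OF r k] unfolding W2_def by auto
      next
        case True
        then have "r = i*s \<or> r = i*s+1" using False dec2[of r] by auto
        then show ?thesis using p(1) d0 W2_comm[of k "i*s" "i*s+1"]
          unfolding W2_def by (auto simp: W2self_bit)
      qed
    qed
    then show "L$$(r,k*s)*L$$(p,k*s+1) + L$$(r,k*s+1)*L$$(p,k*s) = 0" unfolding W2_def .
  qed
  then show False using Zk[OF k, of "L$$(p,k*s)" "L$$(p,k*s+1)"] p(2) by blast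
qed

end



lemma Wlemma_bit: fixes a bq c d e g :: bit
  assumes "a*d + bq*c = 1"
  shows "a*(d*e+bq*g) + bq*(c*e+a*g) + e*1 = 0" "c*(d*e+bq*g) + d*(c*e+a*g) + g*1 = 0"
  using assms by (cases a; cases bq; cases c; cases d; cases e; cases g; simp)+

lemma idx_gen: "i < (b::nat) \<Longrightarrow> r < k \<Longrightarrow> i*k + r < b*k"
proof -
  assume "i < b" "r < k"
  then have "i*k + r < (i+1)*k" by simp
  also have "\<dots> \<le> b*k" using \<open>i<b\<close> by (intro mult_right_mono) auto
  finally show ?thesis .
qed

context T5 begin

abbreviation d where "d \<equiv> s - 2"

lemma d_pos: "d > 0" using s3 by auto

lemma fullD_carrier: "fullD s b L \<in> carrier_mat (b*d) (b*d)"
  unfolding fullD_def by simp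

lemma fullD_entry: assumes "r < b*d" "c < b*d"
  shows "fullD s b L $$ (r,c) = L $$ ((r div d)*s + 2 + r mod d, (c div d)*s + 2 + c mod d)"
  using assms d_pos unfolding fullD_def blkD_def by simp

definition Uv where "Uv u = vec n (\<lambda>p. if 2 \<le> p mod s then u$((p div s)*d + (p mod s - 2)) else 0)"

lemma Dlink: assumes m: "m < n" "2 \<le> m mod s"
  shows "(\<Sum>p<n. Uv u $ p * L$$(p,m)) =
     (\<Sum>r<b*d. u$r * fullD s b L $$ (r, (m div s)*d + (m mod s - 2)))"
proof -
  let ?c = "(m div s)*d + (m mod s - 2)"
  have mdiv: "m div s < b" using m(1) s2 by (simp add: less_mult_imp_div_less mult.commute)
  have msd: "m mod s - 2 < d" using s2 m by (metis diff_less_mono mod_less_divisor s2(2))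
  have c: "?c < b*d" using idx_gen[OF mdiv msd] by (simp add: mult.commute)
  have cdm: "?c div d = m div s" "?c mod d = m mod s - 2" using msd by auto
  have mre: "(m div s)*s + 2 + (m mod s - 2) = m" using m(2) by (metis add.assoc le_add_diff_inverse q_dec)
  let ?g = "\<lambda>p. Uv u $ p * L$$(p,m)"
  have "(\<Sum>p<n. ?g p) = (\<Sum>i<b. \<Sum>r<s. ?g (i*s+r))" by (rule sum_blocks)
  also have "\<dots> = (\<Sum>i<b. \<Sum>t<d. u$(i*d+t) * L$$(i*s+2+t, m))"
  proof (rule sum.cong[OF refl])
    fix i assume i: "i \<in> {..<b}"
    have "(\<Sum>r<s. ?g (i*s+r)) = ?g (i*s+0) + ?g (i*s+1) + (\<Sum>t<d. ?g (i*s+(t+2)))"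
      using sum_first2[OF s2(1)] .
    also have "?g (i*s+0) = 0" using i idx[of i 0] s2 unfolding Uv_def by simp
    also have "?g (i*s+1) = 0" using i idx[of i 1] s3 dm[of 1 i] unfolding Uv_def by simp
    also have "(\<Sum>t<d. ?g (i*s+(t+2))) = (\<Sum>t<d. u$(i*d+t) * L$$(i*s+2+t, m))"
    proof (rule sum.cong[OF refl])
      fix t assume t: "t \<in> {..<d}"
      then have "i*s+(t+2) < n" using i idx[of i "t+2"] by auto
      then show "?g (i*s+(t+2)) = u$(i*d+t) * L$$(i*s+2+t, m)"
        using t dm[of "t+2" i] unfolding Uv_def by (simp add: ac_simps)
    qed
    finally show "(\<Sum>r<s. ?g (i*s+r)) = (\<Sum>t<d. u$(i*d+t) * L$$(i*s+2+t, m))" by simp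
  qed
  also have "\<dots> = (\<Sum>i<b. \<Sum>t<d. u$(i*d+t) * fullD s b L $$ (i*d+t, ?c))"
  proof (intro sum.cong[OF refl])
    fix i t assume i: "i \<in> {..<b}" and t: "t \<in> {..<d}"
    have it: "i*d+t < b*d" using idx_gen[of i b t d] i t by (simp add: mult.commute)
    have "(i*d+t) div d = i" "(i*d+t) mod d = t" using t by auto
    then show "u$(i*d+t) * L$$(i*s+2+t, m) = u$(i*d+t) * fullD s b L $$ (i*d+t, ?c)"
      using fullD_entry[OF it c] cdm mre by simp
  qed
  also have "\<dots> = (\<Sum>r<d*b. u$r * fullD s b L $$ (r, ?c))" by (rule sum_blocks[symmetric])
  finally show ?thesis by (simp add: mult.commute)
qed

end

context T5F begin

lemma Wlemma: assumes i: "i < b" and k: "k < b" "k' < b" "k \<noteq> k'"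
  and nz: "\<not> Az i k" "\<not> Az i k'"
  shows False
proof -
  define a where "a = L$$(i*s,k*s)"
  define bq where "bq = L$$(i*s,k*s+1)"
  define c where "c = L$$(i*s+1,k*s)"
  define dd where "dd = L$$(i*s+1,k*s+1)"
  define e where "e = L$$(i*s,k'*s)"
  define g where "g = L$$(i*s+1,k'*s)"
  have det: "a*dd + bq*c = 1" using A_inv[OF i k(1) nz(1)] unfolding W2_def a_def bq_def c_def dd_def .
  define W where "W = vec n (\<lambda>m. if m = k*s then dd*e+bq*g else if m = k*s+1 then c*e+a*g
      else if m = k'*s then 1 else (0::bit))"
  have kk: "k*s < n" "k*s+1 < n" "k'*s < n" using idx[OF k(1), of 0] idx[OF k(1), of 1] idx[OF k(2), of 0] s3 by auto
  have ne: "k*s \<noteq> k'*s" "k*s+1 \<noteq> k'*s" using k(3) s2 eq_block[of k 1 k' 0] s3 by auto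
  have "W = 0\<^sub>v n"
  proof (rule ZW)
    show "W \<in> carrier_vec n" unfolding W_def by simp
    show "\<forall>p<n. (\<Sum>m<n. L$$(p,m) * W$m) = 0"
    proof (intro allI impI)
      fix p assume p: "p < n"
      have "(\<Sum>m<n. L$$(p,m) * W$m) = L$$(p,k*s) * W$(k*s) + L$$(p,k*s+1) * W$(k*s+1) + L$$(p,k'*s) * W$(k'*s)"
        by (rule sum_support3) (use kk ne in \<open>auto simp: W_def\<close>)
      also have "\<dots> = L$$(p,k*s) * (dd*e+bq*g) + L$$(p,k*s+1) * (c*e+a*g) + L$$(p,k'*s) * 1"
        using kk ne by (simp add: W_def)
      also have "\<dots> = 0"
      proof (cases "2 \<le> p mod s \<or> p div s \<noteq> i")
        case True
        then have "Az (p div s) k \<and> Az (p div s) k' \<or> 2 \<le> p mod s"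
          using col_uniq[OF i blk_lt[OF p] _ k(1) nz(1)] col_uniq[OF i blk_lt[OF p] _ k(2) nz(2)] by auto
        then show ?thesis using rowzero[OF p k(1)] rowzero[OF p k(2)] by auto
      next
        case False
        then have "p = i*s \<or> p = i*s+1" using dec2[of p] by auto
        then show ?thesis using Wlemma_bit[OF det, of e g]
          unfolding a_def bq_def c_def dd_def e_def g_def by auto
      qed
      finally show "(\<Sum>m<n. L$$(p,m) * W$m) = 0" .
    qed
  qed
  then have "W$(k'*s) = 0" using kk by auto
  then show False using kk ne by (simp add: W_def)
qed

definition sig where "sig k = (THE i. i < b \<and> \<not> Az i k)"

lemma sig: assumes k: "k < b" shows "sig k < b" "\<not> Az (sig k) k"
proof -
  obtain i where i: "i < b" "\<not> Az i k" using col_ex[OF k] by blast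
  have "\<exists>!i. i < b \<and> \<not> Az i k" using i col_uniq[OF _ _ _ k] by blast
  from theI'[OF this] show "sig k < b" "\<not> Az (sig k) k" unfolding sig_def by auto
qed

lemma row_ex: assumes i: "i < b" shows "\<exists>k<b. \<not> Az i k"
proof -
  have inj: "inj_on sig {..<b}"
  proof (rule inj_onI)
    fix k k' assume "k \<in> {..<b}" "k' \<in> {..<b}" "sig k = sig k'"
    then show "k = k'" using Wlemma[of "sig k" k k'] sig[of k] sig[of k'] by auto
  qed
  have "sig ` {..<b} \<subseteq> {..<b}" using sig by auto
  then have "sig ` {..<b} = {..<b}" using endo_inj_surj[OF _ _ inj] by auto
  then obtain k where "k < b" "sig k = i" using i by (metis imageE lessThan_iff)
  then show ?thesis using sig by auto
qed

lemma row_uniq: "i < b \<Longrightarrow> k < b \<Longrightarrow> k' < b \<Longrightarrow> \<not> Az i k \<Longrightarrow> \<not> Az i k' \<Longrightarrow> k = k'"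
  using Wlemma by blast

lemma fullD_inv: "invertible_mat (fullD s b L)"
proof -
  let ?D = "fullD s b L"
  have Dc: "?D \<in> carrier_mat (b*d) (b*d)" by (rule fullD_carrier)
  have "det ?D \<noteq> 0"
  proof
    assume "det ?D = 0"
    then have "det (transpose_mat ?D) = 0" using det_transpose[OF Dc] by simp
    then obtain u where u: "u \<in> carrier_vec (b*d)" "u \<noteq> 0\<^sub>v (b*d)" "transpose_mat ?D *\<^sub>v u = 0\<^sub>v (b*d)"
      using det_0_iff_vec_prod_zero[of "transpose_mat ?D" "b*d"] Dc by auto
    have ker: "(\<Sum>r<b*d. u$r * ?D $$ (r, c)) = 0" if c: "c < b*d" for c
    proof -
      have "(transpose_mat ?D *\<^sub>v u) $ c = 0" using u(3) c by simp
      moreover have "(transpose_mat ?D *\<^sub>v u) $ c = (\<Sum>r<b*d. u$r * ?D $$ (r, c))"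
        using Dc c u(1) by (auto simp: scalar_prod_def lessThan_atLeast0 mult.commute intro!: sum.cong)
      ultimately show ?thesis by simp
    qed
    have "Uv u = 0\<^sub>v n"
    proof (rule ZI)
      show "Uv u \<in> carrier_vec n" unfolding Uv_def by simp
      show "\<forall>m<n. (\<Sum>p<n. Uv u $ p * L$$(p,m)) = 0"
      proof (intro allI impI)
        fix m assume m: "m < n"
        show "(\<Sum>p<n. Uv u $ p * L$$(p,m)) = 0"
        proof (cases "2 \<le> m mod s")
          case True
          have mdiv: "m div s < b" using blk_lt[OF m] .
          have msd: "m mod s - 2 < d" using s2 True by (metis diff_less_mono mod_less_divisor s2(2))
          have c: "(m div s)*d + (m mod s - 2) < b*d" using idx_gen[OF mdiv msd] by (simp add: mult.commute)
          show ?thesis using Dlink[OF m True] ker[OF c] by simp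
        next
          case False
          then show ?thesis using Cz[OF _ _ m] by (intro sum.neutral) (auto simp: Uv_def)
        qed
      qed
    qed
    have "u = 0\<^sub>v (b*d)"
    proof (rule eq_vecI)
      show "dim_vec u = dim_vec (0\<^sub>v (b*d))" using u by simp
      fix r assume "r < dim_vec (0\<^sub>v (b*d))"
      then have r: "r < b*d" by simp
      have rdiv: "r div d < b" using r d_pos by (simp add: less_mult_imp_div_less)
      have rmod: "r mod d < d" using d_pos by simp
      let ?p = "(r div d)*s + (2 + r mod d)"
      have p: "?p < n" using idx[OF rdiv, of "2 + r mod d"] rmod by auto
      have pm: "?p mod s = 2 + r mod d" "?p div s = r div d" using dm[of "2 + r mod d" "r div d"] rmod by auto
      have "Uv u $ ?p = u $ r" using p pm unfolding Uv_def by (simp add: div_mult_mod_eq)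
      then show "u $ r = 0\<^sub>v (b*d) $ r" using \<open>Uv u = 0\<^sub>v n\<close> p r by simp
    qed
    then show False using u(2) by simp
  qed
  then show ?thesis using invertible_iff_det[OF Dc] by simp
qed

end



lemma ker2_bit: fixes x0 x1 p q r t :: bit
  assumes "x0*p + x1*r = 0" "x0*q + x1*t = 0" "p*t + q*r = 1"
  shows "x0 = 0 \<and> x1 = 0"
  using assms by (cases x0; cases x1; cases p; cases q; cases r; cases t; simp)

lemma finite_bitvec: "finite (carrier_vec n :: bit vec set)"
proof -
  have U: "(UNIV :: bit set) = {0, 1}" by (auto intro: bit.exhaust)
  have "carrier_vec n \<subseteq> vec_of_list ` {xs. set xs \<subseteq> (UNIV :: bit set) \<and> length xs = n}"
  proof
    fix v :: "bit vec" assume "v \<in> carrier_vec n"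
    then show "v \<in> vec_of_list ` {xs. set xs \<subseteq> UNIV \<and> length xs = n}"
      by (intro image_eqI[of _ _ "list_of_vec v"]) (auto simp: vec_list)
  qed
  moreover have "finite {xs. set xs \<subseteq> (UNIV :: bit set) \<and> length xs = n}"
    by (rule finite_lists_length_eq) (simp add: U)
  ultimately show ?thesis by (meson finite_surj)
qed

context T5 begin

lemma blkA_zero_iff: "blkA s L i k = 0\<^sub>m 2 2 \<longleftrightarrow> Az i k"
proof -
  have "blkA s L i k = 0\<^sub>m 2 2 \<longleftrightarrow> (\<forall>r<2. \<forall>c<2. L$$(i*s+r, k*s+c) = 0)"
    unfolding blkA_def mat_eq_iff by auto
  also have "\<dots> \<longleftrightarrow> Az i k" unfolding Az_def numeral_2_eq_2 less_Suc_eq by auto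
  finally show ?thesis .
qed

lemma blkA_inv_iff: "invertible_mat (blkA s L i k) \<longleftrightarrow> W2 k (i*s) (i*s+1) = 1"
proof -
  have "blkA s L i k \<in> carrier_mat 2 2" unfolding blkA_def by simp
  from invertible2[OF this] show ?thesis unfolding W2_def blkA_def by simp
qed

lemma W2_Az: "Az i k \<Longrightarrow> W2 k (i*s) (i*s+1) = 0" unfolding Az_def W2_def by simp

lemma blkD_row: assumes t: "t' < d"
  shows "row_mult bb (blkD s L i j) $ t' = E i (j*s+2+t')"
  using t bbc unfolding row_mult_def blkD_def E_def
  by (auto simp: scalar_prod_def lessThan_atLeast0 intro!: sum.cong)

lemma blkD_row_dim: "row_mult bb (blkD s L i j) \<in> carrier_vec d"
  unfolding row_mult_def blkD_def by simp

lemma blkC_zero_iff: "blkC s L i j = 0\<^sub>m d 2 \<longleftrightarrow> (\<forall>r<d. \<forall>c<2. L$$(i*s+2+r, j*s+c) = 0)"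
  unfolding blkC_def mat_eq_iff by auto

lemma Cz_from_blk: assumes h: "\<forall>i<b. \<forall>j<b. blkC s L i j = 0\<^sub>m d 2"
  and p: "p < n" "2 \<le> p mod s" and m: "m < n" "m mod s < 2"
  shows "L$$(p,m) = 0"
proof -
  have "p mod s - 2 < d" using p s2 by (metis diff_less_mono mod_less_divisor s2(2))
  moreover have "p = p div s * s + 2 + (p mod s - 2)" using p(2) q_dec[of p] by linarith
  moreover have "m = m div s * s + m mod s" by simp
  ultimately show ?thesis using h blk_lt[OF p(1)] blk_lt[OF m(1)] m(2) unfolding blkC_zero_iff
    by (metis)
qed

lemma fa_block: assumes a: "a \<in> carrier_vec n" and i0: "i0 < b" and k: "k < b" and e: "e < 2"
  and Cz: "\<And>p m. p < n \<Longrightarrow> 2 \<le> p mod s \<Longrightarrow> m < n \<Longrightarrow> m mod s < 2 \<Longrightarrow> L$$(p,m) = 0"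
  and uq: "\<And>i. i < b \<Longrightarrow> i \<noteq> i0 \<Longrightarrow> Az i k"
  shows "f a $ (k*s+e) = a$(i0*s) * L$$(i0*s, k*s+e) + a$(i0*s+1) * L$$(i0*s+1, k*s+e)"
proof -
  have m: "k*s+e < n" using idx[OF k, of e] e s2 by auto
  have me: "(k*s+e) mod s = e" using dm[of e k] e s2 by auto
  have ii: "i0*s < n" "i0*s+1 < n" using idx[OF i0, of 0] idx[OF i0, of 1] s3 by auto
  have ne: "i0*s \<noteq> i0*s+1" by simp
  show ?thesis unfolding f_nth[OF a m]
  proof (rule sum_support2[OF ii ne])
    fix p assume p: "p < n" "p \<noteq> i0*s" "p \<noteq> i0*s+1"
    show "a$p * L$$(p, k*s+e) = 0"
    proof (cases "2 \<le> p mod s")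
      case True then show ?thesis using Cz[OF p(1) True m] me e by simp
    next
      case False
      then have pd: "p = p div s * s + 0 \<or> p = p div s * s + 1" using dec2 by auto
      then have "p div s \<noteq> i0" using p by auto
      then have "Az (p div s) k" using uq blk_lt[OF p(1)] by auto
      then show ?thesis using pd e unfolding Az_def by (auto simp: less_2_cases_iff)
    qed
  qed
qed

lemma converse:
  assumes rowc: "\<forall>i<b. \<exists>k<b. \<not> Az i k"
    and colc: "\<forall>k<b. \<exists>i<b. \<not> Az i k"
    and colu: "\<forall>k<b. \<forall>i<b. \<forall>i'<b. \<not> Az i k \<longrightarrow> \<not> Az i' k \<longrightarrow> i = i'"
    and inv: "\<forall>i<b. \<forall>k<b. \<not> Az i k \<longrightarrow> W2 k (i*s) (i*s+1) = 1"
    and Cz: "\<And>p m. p < n \<Longrightarrow> 2 \<le> p mod s \<Longrightarrow> m < n \<Longrightarrow> m mod s < 2 \<Longrightarrow> L$$(p,m) = 0"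
    and Ev: "\<forall>i<b. \<forall>k<b. \<forall>t<d. E i (k*s+2+t) = W2 k (i*s) (i*s+1) * bb$t"
    and Dinv: "invertible_mat (fullD s b L)"
  shows "f \<in> H_circ (carrier_vec n) op"
proof -
  have omf: "om k (f a) (f c) = om i0 a c"
    if a: "a \<in> carrier_vec n" and c: "c \<in> carrier_vec n" and k: "k < b" and i0: "i0 < b"
      and nz: "\<not> Az i0 k" for a c k i0
  proof -
    have uq: "\<And>i. i < b \<Longrightarrow> i \<noteq> i0 \<Longrightarrow> Az i k" using colu k i0 nz by blast
    have fa0: "f a $ (k*s) = a$(i0*s) * L$$(i0*s, k*s) + a$(i0*s+1) * L$$(i0*s+1, k*s)"
      using fa_block[OF a i0 k, of 0, OF _ Cz uq] by simp
    have fa1: "f a $ (k*s+1) = a$(i0*s) * L$$(i0*s, k*s+1) + a$(i0*s+1) * L$$(i0*s+1, k*s+1)"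
      using fa_block[OF a i0 k, of 1, OF _ Cz uq] by simp
    have fc0: "f c $ (k*s) = c$(i0*s) * L$$(i0*s, k*s) + c$(i0*s+1) * L$$(i0*s+1, k*s)"
      using fa_block[OF c i0 k, of 0, OF _ Cz uq] by simp
    have fc1: "f c $ (k*s+1) = c$(i0*s) * L$$(i0*s, k*s+1) + c$(i0*s+1) * L$$(i0*s+1, k*s+1)"
      using fa_block[OF c i0 k, of 1, OF _ Cz uq] by simp
    have det: "L$$(i0*s, k*s) * L$$(i0*s+1, k*s+1) + L$$(i0*s, k*s+1) * L$$(i0*s+1, k*s) = 1"
      using inv i0 k nz unfolding W2_def by blast
    show ?thesis unfolding om_def fa0 fa1 fc0 fc1 bit_brute8_om det by simp
  qed
  have hom: "\<forall>a\<in>carrier_vec n. \<forall>c\<in>carrier_vec n. f (op a c) = op (f a) (f c)"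
    unfolding hom_iff
  proof (intro ballI allI impI)
    fix a c :: "bit vec" and m assume a: "a \<in> carrier_vec n" and c: "c \<in> carrier_vec n" and m: "m < n"
    show "(\<Sum>i<b. om i a c * E i m) =
      (if 2 \<le> m mod s then om (m div s) (f a) (f c) * bb$(m mod s - 2) else 0)"
    proof (cases "2 \<le> m mod s")
      case False
      have "E i m = 0" if i: "i < b" for i
        unfolding E_def
      proof (rule sum.neutral, intro ballI)
        fix t assume t: "t \<in> {..<d}"
        have "i*s+(2+t) < n" using idx[OF i, of "2+t"] t by auto
        moreover have "(i*s+(2+t)) mod s = 2+t" using dm[of "2+t" i] t by auto
        ultimately have "L$$(i*s+2+t, m) = 0" using Cz[OF _ _ m] False by (simp add: add.assoc)
        then show "bb$t * L$$(i*s+2+t, m) = 0" by simp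
      qed
      then show ?thesis using False by simp
    next
      case True
      let ?k = "m div s" and ?t = "m mod s - 2"
      have k: "?k < b" using blk_lt[OF m] .
      have t: "?t < d" using s2 True by (metis diff_less_mono mod_less_divisor s2(2))
      have mre: "?k*s+2+?t = m" using True by (metis add.assoc le_add_diff_inverse q_dec)
      obtain i0 where i0: "i0 < b" "\<not> Az i0 ?k" using colc k by blast
      have Em: "E i m = W2 ?k (i*s) (i*s+1) * bb$?t" if "i < b" for i
        using Ev that k t mre by metis
      have "(\<Sum>i<b. om i a c * E i m) = om i0 a c * E i0 m"
      proof (rule sum_support1[OF i0(1)])
        fix i assume i: "i < b" "i \<noteq> i0"
        then have "Az i ?k" using colu k i0 by blast
        then show "om i a c * E i m = 0" using Em[OF i(1)] W2_Az by simp
      qed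
      also have "\<dots> = om i0 a c * bb$?t" using Em[OF i0(1)] inv i0 k by simp
      also have "\<dots> = om ?k (f a) (f c) * bb$?t" using omf[OF a c k i0] by simp
      finally show ?thesis using True by simp
    qed
  qed
  have ker: "z = 0\<^sub>v n" if z: "z \<in> carrier_vec n" and fz: "f z = 0\<^sub>v n" for z
  proof -
    have fz0: "(\<Sum>p<n. z$p * L$$(p,m)) = 0" if "m < n" for m
      using fz that f_nth[OF z that] by (metis index_zero_vec(1))
    have zA: "z$(i*s) = 0 \<and> z$(i*s+1) = 0" if i: "i < b" for i
    proof -
      obtain k where k: "k < b" "\<not> Az i k" using rowc i by blast
      have uq: "\<And>i'. i' < b \<Longrightarrow> i' \<noteq> i \<Longrightarrow> Az i' k" using colu k i by blast
      have m0: "k*s < n" "k*s+1 < n" using idx[OF k(1), of 0] idx[OF k(1), of 1] s3 by auto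
      have e0: "z$(i*s) * L$$(i*s, k*s) + z$(i*s+1) * L$$(i*s+1, k*s) = 0"
        using fa_block[OF z i k(1), of 0, OF _ Cz uq] fz0[OF m0(1)] f_nth[OF z m0(1)] by simp
      have e1: "z$(i*s) * L$$(i*s, k*s+1) + z$(i*s+1) * L$$(i*s+1, k*s+1) = 0"
        using fa_block[OF z i k(1), of 1, OF _ Cz uq] fz0[OF m0(2)] f_nth[OF z m0(2)] by simp
      have det: "L$$(i*s, k*s) * L$$(i*s+1, k*s+1) + L$$(i*s, k*s+1) * L$$(i*s+1, k*s) = 1"
        using inv i k unfolding W2_def by blast
      show ?thesis using ker2_bit[OF e0 e1 det] .
    qed
    define u where "u = vec (b*d) (\<lambda>r. z$((r div d)*s + 2 + r mod d))"
    have zU: "z = Uv u"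
    proof (rule eq_vecI)
      show "dim_vec z = dim_vec (Uv u)" using z unfolding Uv_def by simp
      fix p assume "p < dim_vec (Uv u)"
      then have p: "p < n" unfolding Uv_def by simp
      show "z$p = Uv u $ p"
      proof (cases "2 \<le> p mod s")
        case True
        have pd: "p div s < b" using blk_lt[OF p] .
        have pt: "p mod s - 2 < d" using s2 True by (metis diff_less_mono mod_less_divisor s2(2))
        have r: "(p div s)*d + (p mod s - 2) < b*d" using idx_gen[OF pd pt] by simp
        have rr: "((p div s)*d + (p mod s - 2)) div d = p div s" "((p div s)*d + (p mod s - 2)) mod d = p mod s - 2"
          using pt by auto
        have pre: "p div s * s + 2 + (p mod s - 2) = p" using True by (metis add.assoc le_add_diff_inverse q_dec)
        show ?thesis using True p r rr pre unfolding Uv_def u_def by simp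
      next
        case False
        then have "p = p div s * s + 0 \<or> p = p div s * s + 1" using dec2 by auto
        then have "z$p = 0" using zA[OF blk_lt[OF p]] by auto
        then show ?thesis using False p unfolding Uv_def by simp
      qed
    qed
    let ?D = "fullD s b L"
    have Dc: "?D \<in> carrier_mat (b*d) (b*d)" by (rule fullD_carrier)
    have uc: "u \<in> carrier_vec (b*d)" unfolding u_def by simp
    have "transpose_mat ?D *\<^sub>v u = 0\<^sub>v (b*d)"
    proof (rule eq_vecI)
      fix c assume "c < dim_vec (0\<^sub>v (b*d))"
      then have c: "c < b*d" by simp
      have cd: "c div d < b" using c d_pos by (simp add: less_mult_imp_div_less)
      have cm: "c mod d < d" using d_pos by simp
      let ?m = "(c div d)*s + (2 + c mod d)"
      have m: "?m < n" using idx[OF cd, of "2 + c mod d"] cm by auto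
      have mm: "?m mod s = 2 + c mod d" "?m div s = c div d" using dm[of "2 + c mod d" "c div d"] cm by auto
      have ceq: "(?m div s)*d + (?m mod s - 2) = c" using mm by (simp add: div_mult_mod_eq)
      have "(transpose_mat ?D *\<^sub>v u) $ c = (\<Sum>r<b*d. u$r * ?D $$ (r, c))"
        using Dc c uc by (auto simp: scalar_prod_def lessThan_atLeast0 mult.commute intro!: sum.cong)
      also have "\<dots> = (\<Sum>p<n. Uv u $ p * L$$(p,?m))"
        using Dlink[OF m] mm ceq by simp
      also have "\<dots> = 0" using fz0[OF m] zU by simp
      finally show "(transpose_mat ?D *\<^sub>v u) $ c = 0\<^sub>v (b*d) $ c" using c by simp
    qed (use Dc in simp)
    moreover have "det (transpose_mat ?D) \<noteq> 0"
      using Dinv invertible_iff_det[OF Dc] det_transpose[OF Dc] by simp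
    ultimately have "u = 0\<^sub>v (b*d)"
      using det_0_iff_vec_prod_zero[of "transpose_mat ?D" "b*d"] Dc uc by auto
    have "Uv u = 0\<^sub>v n"
    proof (rule eq_vecI)
      fix p assume "p < dim_vec (0\<^sub>v n)"
      then have p: "p < n" by simp
      show "Uv u $ p = 0\<^sub>v n $ p"
      proof (cases "2 \<le> p mod s")
        case True
        have pd: "p div s < b" using blk_lt[OF p] .
        have pt: "p mod s - 2 < d" using s2 True by (metis diff_less_mono mod_less_divisor s2(2))
        have r: "(p div s)*d + (p mod s - 2) < b*d" using idx_gen[OF pd pt] by simp
        show ?thesis using p r True \<open>u = 0\<^sub>v (b*d)\<close> unfolding Uv_def by simp
      qed (use p in \<open>simp add: Uv_def\<close>)
    qed (simp add: Uv_def)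
    then show ?thesis using zU by simp
  qed
  have inj: "inj_on f (carrier_vec n)"
  proof (rule inj_onI)
    fix x y assume x: "x \<in> carrier_vec n" and y: "y \<in> carrier_vec n" and fxy: "f x = f y"
    have "f (x + y) = 0\<^sub>v n"
      using f_add[OF x y] fxy by (intro eq_vecI) auto
    then have "x + y = 0\<^sub>v n" using ker x y by simp
    then have "\<forall>i<n. x$i + y$i = 0" using x y by (metis carrier_vecD index_add_vec(1) index_zero_vec(1))
    then have "\<forall>i<n. x$i = y$i" by (metis bit_add_self add_right_cancel)
    then show "x = y" using x y by (intro eq_vecI) auto
  qed
  have "f ` carrier_vec n = carrier_vec n"
    by (rule endo_inj_surj[OF finite_bitvec _ inj]) auto
  then have "bij_betw f (carrier_vec n) (carrier_vec n)" using inj unfolding bij_betw_def by simp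
  moreover have "\<forall>a\<in>carrier_vec n. \<forall>c\<in>carrier_vec n. f (a + c) = f a + f c" using f_add by blast
  ultimately show ?thesis using hom unfolding H_circ_def by blast
qed

end



theorem theorem5:
  fixes s b :: nat and bb :: "bit vec" and L :: "bit mat"
  assumes "s \<ge> 3" and "b \<ge> 1"
    and "bb \<in> carrier_vec (s - 2)" and "bb \<noteq> 0\<^sub>v (s - 2)"
    and "L \<in> carrier_mat (s * b) (s * b)"
  shows "(\<lambda>x. row_mult x L) \<in> H_circ (carrier_vec (s * b)) (par_circ s b bb)
    \<longleftrightarrow>
      ((\<forall>i<b. \<exists>!j. j < b \<and> blkA s L i j \<noteq> 0\<^sub>m 2 2)
       \<and> (\<forall>j<b. \<exists>!i. i < b \<and> blkA s L i j \<noteq> 0\<^sub>m 2 2)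
       \<and> (\<forall>i<b. \<forall>j<b. blkA s L i j \<noteq> 0\<^sub>m 2 2 \<longrightarrow> invertible_mat (blkA s L i j))
       \<and> (\<forall>i<b. \<forall>j<b. blkB s L i j \<in> carrier_mat 2 (s - 2))
       \<and> (\<forall>i<b. \<forall>j<b. blkC s L i j = 0\<^sub>m (s - 2) 2)
       \<and> (\<forall>i<b. \<forall>j<b.
            (blkA s L i j = 0\<^sub>m 2 2 \<longrightarrow> row_mult bb (blkD s L i j) = 0\<^sub>v (s - 2))
          \<and> (invertible_mat (blkA s L i j) \<longrightarrow> row_mult bb (blkD s L i j) = bb))
       \<and> invertible_mat (fullD s b L))"
proof -
  interpret T5 s b bb L using assms by unfold_locales
  have fe: "(\<lambda>x. row_mult x L) = f" by (rule ext) (simp add: f_def)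
  have Ez: "E i (j*s+2+t) = (if Az i j then 0 else bb$t)"
    if Ev: "\<forall>i<b. \<forall>k<b. \<forall>t<d. E i (k*s+2+t) = W2 k (i*s) (i*s+1) * bb$t"
      and inv: "\<forall>i<b. \<forall>k<b. \<not> Az i k \<longrightarrow> W2 k (i*s) (i*s+1) = 1"
      and ij: "i < b" "j < b" "t < d" for i j t
    using Ev inv ij W2_Az by auto
  show ?thesis unfolding fe
  proof
    assume H: "f \<in> H_circ (carrier_vec n) op"
    interpret T5F s b bb L
      using H unfolding H_circ_def by unfold_locales auto
    have Ev: "\<forall>i<b. \<forall>k<b. \<forall>t<d. E i (k*s+2+t) = W2 k (i*s) (i*s+1) * bb$t"
    proof (intro allI impI)
      fix i k t assume i: "i < b" and k: "k < b" and t: "t < d"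
      have m: "k*s+(2+t) < n" using idx[OF k, of "2+t"] t by auto
      have mm: "(k*s+(2+t)) mod s = 2+t" "(k*s+(2+t)) div s = k" using dm[of "2+t" k] t by auto
      show "E i (k*s+2+t) = W2 k (i*s) (i*s+1) * bb$t"
        using H2[OF i m] mm by (simp add: add.assoc)
    qed
    have inv: "\<forall>i<b. \<forall>k<b. \<not> Az i k \<longrightarrow> W2 k (i*s) (i*s+1) = 1" using A_inv by blast
    show "(\<forall>i<b. \<exists>!j. j < b \<and> blkA s L i j \<noteq> 0\<^sub>m 2 2)
       \<and> (\<forall>j<b. \<exists>!i. i < b \<and> blkA s L i j \<noteq> 0\<^sub>m 2 2)
       \<and> (\<forall>i<b. \<forall>j<b. blkA s L i j \<noteq> 0\<^sub>m 2 2 \<longrightarrow> invertible_mat (blkA s L i j))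
       \<and> (\<forall>i<b. \<forall>j<b. blkB s L i j \<in> carrier_mat 2 (s - 2))
       \<and> (\<forall>i<b. \<forall>j<b. blkC s L i j = 0\<^sub>m (s - 2) 2)
       \<and> (\<forall>i<b. \<forall>j<b.
            (blkA s L i j = 0\<^sub>m 2 2 \<longrightarrow> row_mult bb (blkD s L i j) = 0\<^sub>v (s - 2))
          \<and> (invertible_mat (blkA s L i j) \<longrightarrow> row_mult bb (blkD s L i j) = bb))
       \<and> invertible_mat (fullD s b L)"
      unfolding blkA_zero_iff blkA_inv_iff
    proof (intro conjI allI impI)
      fix i assume i: "i < b"
      show "\<exists>!j. j < b \<and> \<not> Az i j" using row_ex[OF i] row_uniq[OF i] by blast
    next
      fix j assume j: "j < b"
      show "\<exists>!i. i < b \<and> \<not> Az i j" using col_ex[OF j] col_uniq[OF _ _ _ j] by blast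
    next
      fix i j assume "i < b" "j < b" "\<not> Az i j"
      then show "W2 j (i*s) (i*s+1) = 1" using A_inv by blast
    next
      fix i j show "blkB s L i j \<in> carrier_mat 2 (s-2)" unfolding blkB_def by simp
    next
      fix i j assume i: "i < b" and j: "j < b"
      show "blkC s L i j = 0\<^sub>m (s-2) 2" unfolding blkC_zero_iff
      proof (intro allI impI)
        fix r c assume r: "r < d" and c: "c < (2::nat)"
        have p: "i*s+(2+r) < n" using idx[OF i, of "2+r"] r by auto
        have pm: "(i*s+(2+r)) mod s = 2+r" using dm[of "2+r" i] r by auto
        have m: "j*s+c < n" using idx[OF j, of c] c s2 by auto
        have mm: "(j*s+c) mod s = c" using dm[of c j] c s2 by auto
        show "L$$(i*s+2+r, j*s+c) = 0" using Cz[OF p _ m] pm mm c by (simp add: add.assoc)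
      qed
    next
      fix i j assume i: "i < b" and j: "j < b" and "Az i j"
      then show "row_mult bb (blkD s L i j) = 0\<^sub>v (s-2)"
        using Ez[OF Ev inv i j] blkD_row blkD_row_dim by (intro eq_vecI) auto
    next
      fix i j assume i: "i < b" and j: "j < b" and w: "W2 j (i*s) (i*s+1) = 1"
      then have "\<not> Az i j" using W2_Az by auto
      then show "row_mult bb (blkD s L i j) = bb"
        using Ez[OF Ev inv i j] blkD_row blkD_row_dim bbc by (intro eq_vecI) auto
    next
      show "invertible_mat (fullD s b L)" by (rule fullD_inv)
    qed
  next
    assume C: "(\<forall>i<b. \<exists>!j. j < b \<and> blkA s L i j \<noteq> 0\<^sub>m 2 2)
       \<and> (\<forall>j<b. \<exists>!i. i < b \<and> blkA s L i j \<noteq> 0\<^sub>m 2 2)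
       \<and> (\<forall>i<b. \<forall>j<b. blkA s L i j \<noteq> 0\<^sub>m 2 2 \<longrightarrow> invertible_mat (blkA s L i j))
       \<and> (\<forall>i<b. \<forall>j<b. blkB s L i j \<in> carrier_mat 2 (s - 2))
       \<and> (\<forall>i<b. \<forall>j<b. blkC s L i j = 0\<^sub>m (s - 2) 2)
       \<and> (\<forall>i<b. \<forall>j<b.
            (blkA s L i j = 0\<^sub>m 2 2 \<longrightarrow> row_mult bb (blkD s L i j) = 0\<^sub>v (s - 2))
          \<and> (invertible_mat (blkA s L i j) \<longrightarrow> row_mult bb (blkD s L i j) = bb))
       \<and> invertible_mat (fullD s b L)"
    then have C1: "\<forall>i<b. \<exists>!j. j < b \<and> \<not> Az i j"
      and C2: "\<forall>j<b. \<exists>!i. i < b \<and> \<not> Az i j"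
      and C3: "\<forall>i<b. \<forall>j<b. \<not> Az i j \<longrightarrow> W2 j (i*s) (i*s+1) = 1"
      and C5: "\<forall>i<b. \<forall>j<b. blkC s L i j = 0\<^sub>m d 2"
      and C6: "\<forall>i<b. \<forall>j<b. (Az i j \<longrightarrow> row_mult bb (blkD s L i j) = 0\<^sub>v d)
          \<and> (W2 j (i*s) (i*s+1) = 1 \<longrightarrow> row_mult bb (blkD s L i j) = bb)"
      and C7: "invertible_mat (fullD s b L)"
      unfolding blkA_zero_iff blkA_inv_iff by auto
    show "f \<in> H_circ (carrier_vec n) op"
    proof (rule converse)
      show "\<forall>i<b. \<exists>k<b. \<not> Az i k" using C1 by blast
      show "\<forall>k<b. \<exists>i<b. \<not> Az i k" using C2 by blast
      show "\<forall>k<b. \<forall>i<b. \<forall>i'<b. \<not> Az i k \<longrightarrow> \<not> Az i' k \<longrightarrow> i = i'" using C2 by blast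
      show "\<forall>i<b. \<forall>k<b. \<not> Az i k \<longrightarrow> W2 k (i*s) (i*s+1) = 1" using C3 by blast
      show "\<And>p m. p < n \<Longrightarrow> 2 \<le> p mod s \<Longrightarrow> m < n \<Longrightarrow> m mod s < 2 \<Longrightarrow> L$$(p,m) = 0"
        using Cz_from_blk[OF C5] by blast
      show "invertible_mat (fullD s b L)" by (rule C7)
      show "\<forall>i<b. \<forall>k<b. \<forall>t<d. E i (k*s+2+t) = W2 k (i*s) (i*s+1) * bb$t"
      proof (intro allI impI)
        fix i k t assume i: "i < b" and k: "k < b" and t: "t < d"
        show "E i (k*s+2+t) = W2 k (i*s) (i*s+1) * bb$t"
        proof (cases "Az i k")
          case True
          then have "row_mult bb (blkD s L i k) $ t = 0" using C6 i k t by auto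
          then show ?thesis using blkD_row[OF t] True W2_Az by simp
        next
          case False
          then have w: "W2 k (i*s) (i*s+1) = 1" using C3 i k by blast
          then have "row_mult bb (blkD s L i k) $ t = bb $ t" using C6 i k t by auto
          then show ?thesis using blkD_row[OF t] w by simp
        qed
      qed
    qed
  qed
qed


end
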